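(* For every $k\in\mathbb Z$, the $q$-dimension of the charge-$k$ subspace of $\mathcal F^{-1}$ (which is the irreducible $\widehat{\mathfrak{gl}}_\infty$-module of level $-1$ attached to $k$) is $$\mathsf Q^{(k)}_{-1}(q):=\mathrm{tr}_{\mathcal F^{-1}_{(k)}}q^{L_0}=\frac{1}{(q)_\infty^2}\sum_{m\ge0}(-1)^mq^{\frac12m(m+1)+|k|(m+\frac12)}.$$
   Context: Let $\mathcal F^{-1}$ be the bosonic Fock space generated from a vacuum by commuting creation operators $\gamma^+_{-r},\gamma^-_{-r}$, $r\in\frac12+\mathbb Z_{\ge0}$, with basis the monomials $\gamma^+_{-r_1}\cdots\gamma^+_{-r_a}\gamma^-_{-s_1}\cdots\gamma^-_{-s_b}|0\rangle$ ($r_1\ge\cdots\ge r_a>0$, $s_1\ge\cdots\ge s_b>0$ in $\frac12+\mathbb Z$). $L_0$ acts on such a monomial by $\sum r_i+\sum s_j$; $\mathcal F^{-1}_{(k)}$ is the span of monomials with $a-b=k$. $(q)_\infty=\prod_{i\ge1}(1-q^i)$. *)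

theory Defs
  imports "HOL-Analysis.Analysis" "HOL-Library.Multiset"
begin

text \<open>Basis monomials of the bosonic Fock space F^{-1}:
  gamma^+_{-r_1}...gamma^+_{-r_a} gamma^-_{-s_1}...gamma^-_{-s_b}|0>
  with r_i, s_j in 1/2 + Z_{>=0}.  We encode the half-integer j + 1/2 by j :: nat,
  so a monomial is a pair (A, B) of finite multisets of naturals
  (A = indices of the gamma^+ factors, B = those of the gamma^- factors).\<close>

type_synonym fock_monomial = "nat multiset \<times> nat multiset"

definition fock_L0 :: "fock_monomial \<Rightarrow> real" where
  "fock_L0 M = (\<Sum>j\<in>#fst M. real j + 1/2) + (\<Sum>j\<in>#snd M. real j + 1/2)"

definition fock_charge :: "fock_monomial \<Rightarrow> int" where
  "fock_charge M = int (size (fst M)) - int (size (snd M))"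

definition fock_basis :: "int \<Rightarrow> fock_monomial set" where
  "fock_basis k = {M. fock_charge M = k}"

definition qpoch_inf :: "real \<Rightarrow> real" where
  "qpoch_inf q = (\<Prod>i. 1 - q ^ Suc i)"

end

theory Submission
  imports Defs
begin


definition qp :: "real \<Rightarrow> nat \<Rightarrow> real" where "qp q n = (\<Prod>i<n. 1 - q ^ Suc i)"
definition Gs :: "real \<Rightarrow> nat \<Rightarrow> real" where
  "Gs q n = (\<Sum>b. q ^ b / (qp q b * qp q (b + n)))"
definition Ts :: "real \<Rightarrow> nat \<Rightarrow> real" where
  "Ts q n = (\<Sum>m. (-1) ^ m * q ^ (m * (m + 1) div 2 + n * m))"

lemma qp_0[simp]: "qp q 0 = 1" by (simp add: qp_def)
lemma qp_Suc: "qp q (Suc n) = qp q n * (1 - q ^ Suc n)"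
  by (simp add: qp_def)

context
  fixes q :: real
  assumes q0: "0 < q" and q1: "q < 1"
begin

lemma fac_pos: "0 < 1 - q ^ Suc i"
  using power_Suc_less_one[OF q0 q1, of i] by linarith

lemma qp_pos: "0 < qp q n"
  unfolding qp_def using fac_pos by (intro prod_pos) auto

lemma qp_Suc_le: "qp q (Suc n) \<le> qp q n"
  using qp_pos[of n] q0 by (simp add: qp_Suc mult_left_le)

lemma qp_mono: "m \<le> n \<Longrightarrow> qp q n \<le> qp q m"
  by (induction n rule: dec_induct) (auto intro: order_trans[OF qp_Suc_le])

lemma qp_le1: "qp q n \<le> 1"
  using qp_mono[of 0 n] by simp

abbreviation "Q \<equiv> qpoch_inf q"

lemma conv_prod: "convergent_prod (\<lambda>i. 1 - q ^ Suc i)"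
proof -
  have "summable (\<lambda>i. norm ((1 - q ^ Suc i) - 1))"
    using q0 q1 by (simp add: summable_geometric summable_mult)
  thus ?thesis
    by (intro abs_convergent_prod_imp_convergent_prod summable_imp_abs_convergent_prod)
qed

lemma qp_lim: "qp q \<longlonglongrightarrow> Q"
proof -
  have "(\<lambda>n. \<Prod>i\<le>n. 1 - q ^ Suc i) \<longlonglongrightarrow> Q"
    unfolding qpoch_inf_def by (rule convergent_prod_LIMSEQ[OF conv_prod])
  moreover have "(\<lambda>n. \<Prod>i\<le>n. 1 - q ^ Suc i) = (\<lambda>n. qp q (Suc n))"
    by (auto simp: qp_def lessThan_Suc_atMost)
  ultimately show ?thesis by - (rule LIMSEQ_imp_Suc, simp)
qed

lemma Q_le: "Q \<le> qp q n"
  by (rule decseq_ge[OF _ qp_lim]) (auto simp: decseq_def qp_mono)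

lemma Q_pos: "0 < Q"
proof -
  have "Q \<noteq> 0" unfolding qpoch_inf_def
    proof (rule prodinf_nonzero[OF conv_prod])
    fix i show "1 - q ^ Suc i \<noteq> 0" using fac_pos[of i] by linarith
  qed
  moreover have "0 \<le> Q"
    by (rule LIMSEQ_le_const[OF qp_lim]) (use qp_pos less_imp_le in blast)
  ultimately show ?thesis by simp
qed

lemma tele: "(\<Sum>b<Suc N. q ^ b / qp q b) = 1 / qp q N"
proof (induction N)
  case (Suc N)
  have "1 / qp q N + q ^ Suc N / qp q (Suc N) = 1 / qp q (Suc N)"
    using qp_pos[of N] fac_pos[of N] by (simp add: qp_Suc field_simps)
  with Suc show ?case by simp
qed simp

lemma sums_inv: "(\<lambda>b. q ^ b / qp q b) sums (1 / Q)"
proof -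
  have "(\<lambda>N. 1 / qp q N) \<longlonglongrightarrow> 1 / Q"
    using Q_pos by (intro tendsto_divide qp_lim) auto
  thus ?thesis unfolding sums_def by - (rule LIMSEQ_imp_Suc, simp only: tele)
qed

lemma aterm_nonneg: "0 \<le> q ^ b / (qp q b * qp q c)"
  using q0 qp_pos[of b] qp_pos[of c] by simp

lemma aterm_le: "q ^ b / (qp q b * qp q c) \<le> q ^ b / qp q b / Q"
proof -
  have "q ^ b / (qp q b * qp q c) = q ^ b / qp q b / qp q c" by simp
  also have "\<dots> \<le> q ^ b / qp q b / Q"
    using Q_pos Q_le[of c] q0 qp_pos[of b]
    by (intro divide_left_mono) auto
  finally show ?thesis .
qed

lemma aterm_summable: "summable (\<lambda>b. q ^ b / (qp q b * qp q (b + n)))"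
proof (rule summable_comparison_test')
  show "summable (\<lambda>b. q ^ b / qp q b / Q)"
    using sums_inv by (intro summable_divide) (simp add: sums_iff)
  fix b show "norm (q ^ b / (qp q b * qp q (b + n))) \<le> q ^ b / qp q b / Q"
    unfolding real_norm_def by (subst abs_of_nonneg[OF aterm_nonneg]) (rule aterm_le)
qed

lemma Gs_le: "Gs q n \<le> 1 / Q ^ 2"
proof -
  have "Gs q n \<le> (\<Sum>b. q ^ b / qp q b / Q)"
    unfolding Gs_def using sums_inv aterm_le
    by (intro suminf_le aterm_summable summable_divide) (auto simp: sums_iff)
  also have "\<dots> = (\<Sum>b. q ^ b / qp q b) / Q"
    by (rule suminf_divide) (use sums_inv in \<open>simp add: sums_iff\<close>)
  also have "\<dots> = 1 / Q ^ 2"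
    by (simp add: sums_unique[OF sums_inv, symmetric] power2_eq_square)
  finally show ?thesis .
qed

lemma Gs_nonneg: "0 \<le> Gs q n"
  unfolding Gs_def by (intro suminf_nonneg aterm_summable aterm_nonneg)

lemma Gs_ge: "1 / (qp q n * Q) \<le> Gs q n"
proof -
  have "(\<Sum>b. q ^ b / qp q b / qp q n) \<le> Gs q n"
    unfolding Gs_def
  proof (intro suminf_le aterm_summable summable_divide allI)
    show "summable (\<lambda>b. q ^ b / qp q b)" using sums_inv by (simp add: sums_iff)
    fix b
    have "q ^ b / qp q b / qp q n \<le> q ^ b / qp q b / qp q (b + n)"
      using qp_mono[of n "b+n"] qp_pos[of n] qp_pos[of "b+n"] qp_pos[of b] q0
      by (intro divide_left_mono) auto
    thus "q ^ b / qp q b / qp q n \<le> q ^ b / (qp q b * qp q (b + n))" by simp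
  qed
  moreover have "(\<Sum>b. q ^ b / qp q b / qp q n) = (\<Sum>b. q ^ b / qp q b) / qp q n"
    by (rule suminf_divide) (use sums_inv in \<open>simp add: sums_iff\<close>)
  moreover have "(\<Sum>b. q ^ b / qp q b) = 1 / Q" using sums_unique[OF sums_inv] by simp
  ultimately show ?thesis by (simp add: ac_simps)
qed

lemma Gs_lim: "Gs q \<longlonglongrightarrow> 1 / Q ^ 2"
proof (rule tendsto_sandwich[of "\<lambda>n. 1 / (qp q n * Q)" _ _ "\<lambda>n. 1 / Q ^ 2"])
  show "(\<lambda>n. 1 / (qp q n * Q)) \<longlonglongrightarrow> 1 / Q ^ 2"
    using Q_pos by (auto intro!: tendsto_eq_intros qp_lim simp: power2_eq_square)
qed (use Gs_le Gs_ge in auto)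

lemma aterm_rec:
  "q^b/(qp q b * qp q (b+n)) + q^(n+1) * (q^b/(qp q b * qp q (b+(n+1))))
   = q^b/(qp q b * qp q (b+(n+1))) + q^(n+1) * (q^b*(1-q^b)/(qp q b * qp q (b+n+1)))"
proof -
  define P where "P = qp q b"
  define R where "R = qp q (b+n)"
  define x where "x = q^b"
  define y where "y = q^(n+1)"
  define f where "f = 1 - x * y"
  have e: "qp q (b+(n+1)) = R * f" "qp q (b+n+1) = R * f"
    by (simp_all add: R_def f_def qp_Suc power_add mult_ac x_def y_def)
  have pos: "0 < P" "0 < R" "0 < f"
    using qp_pos fac_pos[of "b+n"] by (simp_all add: P_def R_def f_def power_add mult_ac x_def y_def)
  have "x/(P*R) = x*f/(P*(R*f))" using pos by simp
  hence L: "x/(P*R) + y*(x/(P*(R*f))) = (x*f + y*x)/(P*(R*f))"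
    by (simp add: add_divide_distrib)
  have Rr: "x/(P*(R*f)) + y*(x*(1-x)/(P*(R*f))) = (x + y*(x*(1-x)))/(P*(R*f))"
    by (simp add: add_divide_distrib)
  have "x*f + y*x = x + y*(x*(1-x))" unfolding f_def by (simp add: algebra_simps)
  hence "x/(P*R) + y*(x/(P*(R*f))) = x/(P*(R*f)) + y*(x*(1-x)/(P*(R*f)))"
    using L Rr by simp
  thus ?thesis unfolding e P_def[symmetric] R_def[symmetric] x_def[symmetric] y_def[symmetric] .
qed

lemma hterm_shift:
  "q^(Suc b)*(1-q^(Suc b))/(qp q (Suc b) * qp q (Suc b+n+1)) = q * (q^b/(qp q b * qp q (b+(n+2))))"
proof -
  define x where "x = q ^ Suc b"
  define P where "P = qp q b"
  define S where "S = qp q (b+(n+2))"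
  have "Suc b + n + 1 = b + (n+2)" by simp
  hence e: "qp q (Suc b) = P * (1 - x)" "qp q (Suc b+n+1) = S"
    by (simp_all add: qp_Suc P_def S_def x_def del: power_Suc)
  have pos: "0 < 1 - x" "0 < P" "0 < S" using fac_pos[of b] qp_pos by (simp_all add: x_def P_def S_def del: power_Suc)
  have "q^(Suc b)*(1-q^(Suc b))/(qp q (Suc b) * qp q (Suc b+n+1)) = x*(1-x)/(P*(1-x)*S)"
    by (simp only: e x_def)
  also have "\<dots> = x/(P*S)" using pos by simp
  also have "\<dots> = q * (q^b/(qp q b * qp q (b+(n+2))))" by (simp add: x_def P_def S_def)
  finally show ?thesis .
qed

lemma Gs_rec: "Gs q n + q^(n+1) * Gs q (n+1) = Gs q (n+1) + q^(n+2) * Gs q (n+2)"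
proof -
  define h where "h b = q^b*(1-q^b)/(qp q b * qp q (b+n+1))" for b
  have hs: "h (Suc b) = q * (q^b/(qp q b * qp q (b+(n+2))))" for b
    unfolding h_def by (rule hterm_shift)
  have sh: "summable h"
    by (subst summable_Suc_iff[symmetric]) (simp only: hs, intro summable_mult aterm_summable)
  have "suminf h = (\<Sum>b. h (Suc b)) + h 0"
    using suminf_split_head[OF sh] by simp
  also have "\<dots> = (\<Sum>b. q * (q^b/(qp q b * qp q (b+(n+2)))))"
    by (simp only: hs) (simp add: h_def)
  also have "\<dots> = q * Gs q (n+2)"
    unfolding Gs_def by (rule suminf_mult[OF aterm_summable])
  finally have hsum: "suminf h = q * Gs q (n+2)" .
  have m1: "q^(n+1) * Gs q (n+1) = (\<Sum>b. q^(n+1) * (q^b/(qp q b * qp q (b+(n+1)))))"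
    unfolding Gs_def by (rule suminf_mult[symmetric, OF aterm_summable])
  have "Gs q n + q^(n+1) * Gs q (n+1) =
        (\<Sum>b. q^b/(qp q b * qp q (b+n)) + q^(n+1) * (q^b/(qp q b * qp q (b+(n+1)))))"
    unfolding m1 unfolding Gs_def
    by (rule suminf_add[OF aterm_summable summable_mult[OF aterm_summable]])
  also have "\<dots> = (\<Sum>b. q^b/(qp q b * qp q (b+(n+1))) + q^(n+1) * h b)"
    unfolding h_def aterm_rec ..
  also have "\<dots> = Gs q (n+1) + q^(n+1) * suminf h"
    unfolding Gs_def suminf_mult[OF sh, symmetric]
    by (rule suminf_add[OF aterm_summable summable_mult[OF sh], symmetric])
  finally show ?thesis by (simp add: hsum)
qed

definition "Hs n = Gs q n + q^(n+1) * Gs q (n+1)"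

lemma Hs_const: "Hs n = Hs 0"
proof (induction n)
  case (Suc n) thus ?case using Gs_rec[of n] by (simp add: Hs_def)
qed simp

lemma Hs_val: "Hs n = 1 / Q^2"
proof -
  have "(\<lambda>n. q^(n+1) * Gs q (n+1)) \<longlonglongrightarrow> 0"
  proof (rule tendsto_sandwich[of "\<lambda>_. 0" _ _ "\<lambda>n. q^(n+1) * (1/Q^2)"])
    have "(\<lambda>n. q^n) \<longlonglongrightarrow> 0" by (rule LIMSEQ_power_zero) (use q0 q1 in simp)
    from LIMSEQ_Suc[OF this] have "(\<lambda>n. q^(n+1)) \<longlonglongrightarrow> 0" by simp
    thus "(\<lambda>n. q^(n+1) * (1/Q^2)) \<longlonglongrightarrow> 0"
      by (intro tendsto_mult_left_zero)
    show "eventually (\<lambda>n. q^(n+1)*Gs q (n+1) \<le> q^(n+1)*(1/Q^2)) sequentially"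
      using Gs_le q0 by (intro always_eventually allI mult_left_mono) auto
    show "eventually (\<lambda>n. 0 \<le> q^(n+1)*Gs q (n+1)) sequentially"
      using Gs_nonneg q0 by (intro always_eventually allI mult_nonneg_nonneg) auto
  qed simp
  hence "Hs \<longlonglongrightarrow> 1/Q^2 + 0" unfolding Hs_def by (intro tendsto_add Gs_lim)
  moreover have "Hs \<longlonglongrightarrow> Hs 0"
  proof -
    have "(\<lambda>n. Hs 0) \<longlonglongrightarrow> Hs 0" by (rule tendsto_const)
    thus ?thesis by (rule Lim_transform_eventually) (intro always_eventually allI, rule Hs_const[symmetric])
  qed
  ultimately have "Hs 0 = 1/Q^2" using LIMSEQ_unique by fastforce
  thus ?thesis using Hs_const by simp
qed

lemma tri: "Suc m * (Suc m + 1) div 2 = m * (m + 1) div 2 + Suc m"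
proof -
  have "Suc m * (Suc m + 1) = m * (m+1) + 2 * Suc m" by (simp add: algebra_simps)
  thus ?thesis by simp
qed

lemma tterm_bound: "norm ((-1::real) ^ m * q ^ (m * (m + 1) div 2 + n * m)) \<le> q ^ m"
proof -
  have "m \<le> m * (m + 1) div 2 + n * m"
  proof (cases m)
    case (Suc k) thus ?thesis using tri[of k] by simp
  qed simp
  thus ?thesis using q0 q1 by (simp add: abs_mult power_abs power_decreasing)
qed

lemma tterm_summable: "summable (\<lambda>m. (-1::real) ^ m * q ^ (m * (m + 1) div 2 + n * m))"
  by (rule summable_comparison_test'[OF summable_geometric tterm_bound]) (use q0 q1 in auto)

lemma Ts_bound: "\<bar>Ts q n\<bar> \<le> 1 / (1 - q)"
proof -
  define t where "t m = (-1::real) ^ m * q ^ (m * (m + 1) div 2 + n * m)" for m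
  have gs: "summable (\<lambda>m. q ^ m)" using q0 q1 by (simp add: summable_geometric)
  have tb: "norm (norm (t m)) \<le> q ^ m" for m using tterm_bound unfolding t_def by simp
  have sn: "summable (\<lambda>m. norm (t m))"
    by (rule summable_comparison_test'[OF gs tb])
  have "\<bar>Ts q n\<bar> \<le> (\<Sum>m. norm (t m))"
    unfolding Ts_def t_def[symmetric] using summable_norm[OF sn] by simp
  also have "\<dots> \<le> (\<Sum>m. q ^ m)"
    by (intro suminf_le sn gs) (use tb in simp)
  also have "\<dots> = 1 / (1 - q)" using q0 q1 by (simp add: suminf_geometric)
  finally show ?thesis .
qed

lemma Ts_rec: "Ts q n = 1 - (q^(n+1)) * Ts q (n+1)"
proof -
  have sp: "Ts q n = 1 + (\<Sum>m. (-1::real) ^ Suc m * q ^ (Suc m * (Suc m + 1) div 2 + n * Suc m))"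
    unfolding Ts_def using suminf_split_head[OF tterm_summable[of n]] by simp
  have eqm: "(-1::real) ^ Suc m * q ^ (Suc m * (Suc m + 1) div 2 + n * Suc m)
        = - (q^(n+1)) * ((-1) ^ m * q ^ (m * (m + 1) div 2 + (n+1) * m))" for m
  proof -
    have "Suc m * (Suc m + 1) div 2 + n * Suc m = (n+1) + (m * (m + 1) div 2 + (n+1) * m)"
      unfolding tri by (simp add: algebra_simps)
    thus ?thesis by (simp add: power_add)
  qed
  have "(\<Sum>m. (-1::real) ^ Suc m * q ^ (Suc m * (Suc m + 1) div 2 + n * Suc m))
        = (\<Sum>m. - (q^(n+1)) * ((-1) ^ m * q ^ (m * (m + 1) div 2 + (n+1) * m)))" by (simp only: eqm)
  also have "\<dots> = - (q^(n+1)) * Ts q (n+1)"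
    unfolding Ts_def by (rule suminf_mult[OF tterm_summable])
  finally show ?thesis using sp by simp
qed

lemma main_analytic: "Q^2 * Gs q n = Ts q n"
proof -
  define D where "D n = Q^2 * Gs q n - Ts q n" for n
  have R: "Q^2 * Gs q n = 1 - (q^(n+1)) * (Q^2 * Gs q (n+1))" for n
    using Hs_val[of n] Q_pos unfolding Hs_def by (simp add: field_simps)
  have Drec: "D n = - (q^(n+1)) * D (n+1)" for n
    unfolding D_def using R[of n] Ts_rec[of n] by (simp add: algebra_simps)
  define M where "M = 1 + 1 / (1 - q)"
  have Db: "\<bar>D n\<bar> \<le> M" for n
  proof -
    have "0 \<le> Q^2 * Gs q n" using Gs_nonneg by simp
    moreover have "Q^2 * Gs q n \<le> 1" using Gs_le[of n] Q_pos by (simp add: field_simps)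
    ultimately show ?thesis unfolding D_def M_def using Ts_bound[of n] by linarith
  qed
  have Dj: "\<bar>D n\<bar> \<le> q^j * M" for j n
  proof (induction j arbitrary: n)
    case 0 thus ?case using Db by simp
  next
    case (Suc j)
    have "\<bar>D n\<bar> = q^(n+1) * \<bar>D (n+1)\<bar>" using Drec[of n] q0 by (simp add: abs_mult)
    also have "\<dots> \<le> q * (q^j * M)"
    proof (rule mult_mono)
      show "q^(n+1) \<le> q" using q0 q1 power_decreasing[of 1 "n+1" q] by simp
    qed (use Suc q0 in auto)
    finally show ?case by simp
  qed
  have "\<bar>D n\<bar> \<le> 0"
  proof (rule LIMSEQ_le_const)
    have "(\<lambda>n. q^n) \<longlonglongrightarrow> 0" by (rule LIMSEQ_power_zero) (use q0 q1 in simp)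
    thus "(\<lambda>j. q^j * M) \<longlonglongrightarrow> 0"
      by (intro tendsto_mult_left_zero)
  qed (use Dj in auto)
  thus ?thesis unfolding D_def by simp
qed

end


lemma has_sum_Sigma_nonneg:
  fixes f :: "'a \<times> 'b \<Rightarrow> real"
  assumes sl: "\<And>x. x \<in> A \<Longrightarrow> ((\<lambda>y. f (x, y)) has_sum g x) (B x)"
    and gs: "(g has_sum S) A"
    and nn: "\<And>x y. x \<in> A \<Longrightarrow> y \<in> B x \<Longrightarrow> 0 \<le> f (x, y)"
  shows "(f has_sum S) (Sigma A B)"
proof (rule has_sum_SigmaI[OF sl gs])
  show "f summable_on Sigma A B"
    by (rule summable_on_SigmaI[OF sl _ nn]) (use gs in \<open>auto simp: summable_on_def\<close>)
qed

lemma has_sum_Times_nonneg: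
  fixes f :: "'a \<Rightarrow> real" and g :: "'b \<Rightarrow> real"
  assumes "(f has_sum a) A" "(g has_sum b) B"
    and "\<And>x. x \<in> A \<Longrightarrow> 0 \<le> f x" "\<And>y. y \<in> B \<Longrightarrow> 0 \<le> g y"
  shows "((\<lambda>p. f (fst p) * g (snd p)) has_sum (a * b)) (A \<times> B)"
proof (rule has_sum_Sigma_nonneg)
  show "((\<lambda>y. f (fst (x, y)) * g (snd (x, y))) has_sum f x * b) B" for x
    using has_sum_cmult_right[OF assms(2), of "f x"] by simp
  show "((\<lambda>x. f x * b) has_sum a * b) A" by (rule has_sum_cmult_left[OF assms(1)])
qed (use assms in auto)

lemma sum_mset_plus_const: "sum_mset (image_mset (\<lambda>x. x + t) B) = sum_mset B + size B * (t::nat)"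
  by (induction B) auto

lemma sum_mset_half: "(\<Sum>j\<in>#A. real j + 1/2) = real (sum_mset A) + real (size A) / 2"
  by (induction A) (auto simp: algebra_simps)

context
  fixes q :: real
  assumes q0: "0 < q" and q1: "q < 1"
begin

lemma msets_has_sum: "((\<lambda>A. q ^ sum_mset A) has_sum (1 / qp q a)) {A :: nat multiset. size A = a}"
proof (induction a)
  case 0
  have "{A :: nat multiset. size A = 0} = {{#}}" by auto
  thus ?case using has_sum_finite[of "{{#}}" "\<lambda>A. q ^ sum_mset A"] by simp
next
  case (Suc a)
  define j :: "nat \<times> nat multiset \<Rightarrow> nat multiset" where
    "j = (\<lambda>p. add_mset (fst p) (image_mset (\<lambda>x. x + fst p) (snd p)))"
  define mi :: "nat multiset \<Rightarrow> nat" where "mi A = Min (set_mset A)" for A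
  define i where "i A = (mi A, image_mset (\<lambda>x. x - mi A) (A - {#mi A#}))" for A
  define S where "S = (UNIV :: nat set) \<times> {B :: nat multiset. size B = a}"
  define T where "T = {A :: nat multiset. size A = Suc a}"
  have geo: "((\<lambda>t. (q ^ Suc a) ^ t) has_sum (1 / (1 - q ^ Suc a))) UNIV"
  proof (rule sums_nonneg_imp_has_sum)
    have "q ^ Suc a < 1" using power_Suc_less_one[OF q0 q1] .
    thus "(\<lambda>t. (q ^ Suc a) ^ t) sums (1 / (1 - q ^ Suc a))"
      using q0 by (intro geometric_sums) simp
  qed (use q0 in simp)
  have hs: "((\<lambda>p. (q ^ Suc a) ^ fst p * q ^ sum_mset (snd p)) has_sum
             (1 / (1 - q ^ Suc a) * (1 / qp q a))) S"
    unfolding S_def by (rule has_sum_Times_nonneg[OF geo Suc.IH]) (use q0 in auto)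
  have "((\<lambda>p. (q ^ Suc a) ^ fst p * q ^ sum_mset (snd p)) has_sum
             (1 / (1 - q ^ Suc a) * (1 / qp q a))) S = ((\<lambda>A. q ^ sum_mset A) has_sum (1 / qp q (Suc a))) T"
  proof (rule has_sum_reindex_bij_witness[of _ i j])
    fix p assume "p \<in> S"
    then obtain t B where p: "p = (t, B)" and B: "size B = a" by (auto simp: S_def)
    have mi: "mi (j p) = t"
      unfolding mi_def j_def p by (intro Min_eqI) auto
    show "i (j p) = p"
      unfolding i_def mi by (simp add: p j_def multiset.map_comp o_def)
    show "j p \<in> T" using B by (simp add: p j_def T_def)
    show "q ^ sum_mset (j p) = (q ^ Suc a) ^ fst p * q ^ sum_mset (snd p)"
      using B by (simp add: p j_def sum_mset_plus_const power_add power_mult algebra_simps)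
  next
    fix A assume "A \<in> T"
    hence sA: "size A = Suc a" by (simp add: T_def)
    hence ne: "A \<noteq> {#}" by auto
    have mA: "mi A \<in># A" unfolding mi_def using ne by simp
    have le: "mi A \<le> x" if "x \<in># A" for x
      unfolding mi_def using that by simp
    have "image_mset (\<lambda>x. x - mi A + mi A) (A - {#mi A#}) = A - {#mi A#}"
    proof -
      have "image_mset (\<lambda>x. x - mi A + mi A) (A - {#mi A#}) = image_mset (\<lambda>x. x) (A - {#mi A#})"
        by (rule image_mset_cong) (use le in_diffD in fastforce)
      thus ?thesis by simp
    qed
    thus "j (i A) = A"
      by (simp add: i_def j_def multiset.map_comp o_def insert_DiffM[OF mA])
    show "i A \<in> S" using sA mA by (simp add: i_def S_def size_Diff_singleton)
  next
    show "1 / (1 - q ^ Suc a) * (1 / qp q a) = 1 / qp q (Suc a)"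
      by (simp add: qp_Suc)
  qed
  with hs show ?case by (simp add: T_def)
qed

lemma fock_nat: "((\<lambda>M. q powr fock_L0 M) has_sum (q powr (real n / 2) * Gs q n)) (fock_basis (int n))"
proof -
  define S where "S = Sigma (UNIV :: nat set) (\<lambda>b. {A :: nat multiset. size A = b + n} \<times> {B :: nat multiset. size B = b})"
  define g where "g p = (q powr (real n / 2) * q ^ fst p) *
      (q ^ sum_mset (fst (snd p)) * q ^ sum_mset (snd (snd p)))" for p :: "nat \<times> nat multiset \<times> nat multiset"
  have outer: "((\<lambda>b. q powr (real n / 2) * q ^ b * (1 / qp q (b + n) * (1 / qp q b))) has_sum
                (q powr (real n / 2) * Gs q n)) UNIV"
  proof -
    have "((\<lambda>b. q ^ b / (qp q b * qp q (b + n))) has_sum Gs q n) UNIV"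
      unfolding Gs_def
      by (rule sums_nonneg_imp_has_sum[OF summable_sums[OF aterm_summable[OF q0 q1]]])
         (rule aterm_nonneg[OF q0 q1])
    from has_sum_cmult_right[OF this, of "q powr (real n / 2)"] show ?thesis
      by (simp add: mult_ac)
  qed
  have slice: "((\<lambda>y. g (b, y)) has_sum q powr (real n / 2) * q ^ b * (1 / qp q (b + n) * (1 / qp q b)))
                 ({A :: nat multiset. size A = b + n} \<times> {B :: nat multiset. size B = b})" for b
  proof -
    have "((\<lambda>p. q ^ sum_mset (fst p) * q ^ sum_mset (snd p)) has_sum (1 / qp q (b + n) * (1 / qp q b)))
            ({A :: nat multiset. size A = b + n} \<times> {B :: nat multiset. size B = b})"
      by (rule has_sum_Times_nonneg[OF msets_has_sum msets_has_sum]) (use q0 q1 in auto)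
    from has_sum_cmult_right[OF this, of "q powr (real n / 2) * q ^ b"] show ?thesis
      by (simp add: g_def)
  qed
  have hS: "(g has_sum (q powr (real n / 2) * Gs q n)) S"
    unfolding S_def by (rule has_sum_Sigma_nonneg[OF slice outer]) (use q0 in \<open>auto simp: g_def\<close>)
  have "(g has_sum (q powr (real n / 2) * Gs q n)) S =
        ((\<lambda>M. q powr fock_L0 M) has_sum (q powr (real n / 2) * Gs q n)) (fock_basis (int n))"
  proof (rule has_sum_reindex_bij_witness[of _ "\<lambda>M. (size (snd M), M)" snd])
    fix p assume "p \<in> S"
    then obtain b A B where p: "p = (b, A, B)" and A: "size A = b + n" and B: "size B = b"
      by (auto simp: S_def)
    show "(size (snd (snd p)), snd p) = p" using B by (simp add: p)
    show "snd p \<in> fock_basis (int n)" using A B by (simp add: p fock_basis_def fock_charge_def)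
    have L: "fock_L0 (A, B) = real (sum_mset A + sum_mset B) + real b + real n / 2"
      unfolding fock_L0_def by (simp only: fst_conv snd_conv sum_mset_half) (simp add: A B field_simps)
    have "q powr fock_L0 (snd p) = q powr (real (sum_mset A + sum_mset B + b) + real n / 2)"
      unfolding p snd_conv L by (simp only: of_nat_add)
    also have "\<dots> = q powr real (sum_mset A + sum_mset B + b) * q powr (real n / 2)"
      by (rule powr_add)
    also have "\<dots> = q ^ (sum_mset A + sum_mset B + b) * q powr (real n / 2)"
      by (simp only: powr_realpow[OF q0])
    also have "\<dots> = g p" by (simp add: p g_def power_add mult_ac)
    finally show "q powr fock_L0 (snd p) = g p" .
  next
    fix M assume "M \<in> fock_basis (int n)"
    hence "size (fst M) = size (snd M) + n" by (simp add: fock_basis_def fock_charge_def)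
    thus "(size (snd M), M) \<in> S" by (simp add: S_def mem_Times_iff)
  qed simp_all
  with hS show ?thesis by simp
qed

lemma value_eq:
  "1 / (qpoch_inf q)\<^sup>2 * (\<Sum>m. (-1) ^ m * q powr (real (m * (m + 1)) / 2 + real n * (real m + 1/2)))
   = q powr (real n / 2) * Gs q n"
proof -
  have t: "(-1) ^ m * q powr (real (m * (m + 1)) / 2 + real n * (real m + 1/2))
         = q powr (real n / 2) * ((-1::real) ^ m * q ^ (m * (m + 1) div 2 + n * m))" for m
  proof -
    have ev: "2 dvd m * (m + 1)" by simp
    have ex: "real (m * (m + 1)) / 2 + real n * (real m + 1/2) = real (m * (m + 1) div 2 + n * m) + real n / 2"
      using real_of_nat_div[OF ev] by (simp add: algebra_simps)
    have "q powr (real (m * (m + 1)) / 2 + real n * (real m + 1/2))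
          = q powr real (m * (m + 1) div 2 + n * m) * q powr (real n / 2)"
      unfolding ex by (rule powr_add)
    also have "\<dots> = q ^ (m * (m + 1) div 2 + n * m) * q powr (real n / 2)"
      using q0 by (simp only: powr_realpow)
    finally show ?thesis by (simp add: mult_ac)
  qed
  have "(\<Sum>m. (-1) ^ m * q powr (real (m * (m + 1)) / 2 + real n * (real m + 1/2)))
        = q powr (real n / 2) * Ts q n"
    unfolding t Ts_def by (rule suminf_mult[OF tterm_summable[OF q0 q1]])
  moreover have "(qpoch_inf q)\<^sup>2 * Gs q n = Ts q n" by (rule main_analytic[OF q0 q1])
  moreover have "0 < qpoch_inf q" by (rule Q_pos[OF q0 q1])
  ultimately show ?thesis by (simp add: field_simps)
qed

end

theorem proposition2p10:
  fixes k :: int and q :: real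
  assumes "0 < q" and "q < 1"
  shows "((\<lambda>M. q powr fock_L0 M) has_sum
           (1 / (qpoch_inf q)\<^sup>2 *
             (\<Sum>m. (-1) ^ m * q powr (real (m * (m + 1)) / 2 + real_of_int \<bar>k\<bar> * (real m + 1/2)))))
         (fock_basis k)"
proof -
  define n where "n = nat \<bar>k\<bar>"
  have kn: "real_of_int \<bar>k\<bar> = real n" by (simp add: n_def)
  have V: "((\<lambda>M. q powr fock_L0 M) has_sum (q powr (real n / 2) * Gs q n)) (fock_basis k)"
  proof (cases "k \<ge> 0")
    case True
    hence "k = int n" by (simp add: n_def)
    thus ?thesis using fock_nat[OF assms] by simp
  next
    case False
    hence kk: "k = - int n" by (simp add: n_def)
    have "((\<lambda>M. q powr fock_L0 M) has_sum (q powr (real n / 2) * Gs q n)) (fock_basis (int n)) =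
          ((\<lambda>M. q powr fock_L0 M) has_sum (q powr (real n / 2) * Gs q n)) (fock_basis k)"
      by (rule has_sum_reindex_bij_witness[of _ prod.swap prod.swap])
         (auto simp: kk fock_basis_def fock_charge_def fock_L0_def add.commute)
    thus ?thesis using fock_nat[OF assms] by simp
  qed
  show ?thesis unfolding kn value_eq[OF assms] by (rule V)
qed

end
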